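(* Let $(\mathcal{A},m)$ be a multiarrangement and fix a hyperplane $H_0\in \mathcal{A}$ with $H_0=\ker \alpha_{H_0}$. If $\delta\in D_0^p(\mathcal{A},m)$, then $\delta|_{H_0} \in D^p(\mathcal{A}^{H_0},m^{H_0})$. In particular, this gives well-defined restriction maps $\mathrm{res}_{H_0}^p : D_0^p (\mathcal{A},m) \rightarrow D^p (\mathcal{A}^{H_0},m^{H_0})$, $\delta\mapsto\delta|_{H_0}$.
   Context: Let $V=\mathbb{K}^\ell$, $S=\mathbb{K}[x_1,\ldots,x_\ell]$, and let $(\mathcal{A},m)$ be a multiarrangement (a finite set of linear hyperplanes $\mathcal{A}$ in $V$ with multiplicity $m:\mathcal{A}\to\mathbb{Z}_{>0}$), each $H\in\mathcal{A}$ having defining linear form $\alpha_H$. For $p\ge1$, $\mathrm{Der}^p(S)$ is the $S$-module of alternating $p$-linear forms $S^p\to S$ that are $\mathbb{K}$-derivations in each variable, and $D^p(\mathcal{A},m)=\{\theta\in \mathrm{Der}^p(S)\mid \theta(\alpha_H,f_2,\ldots,f_p)\in\alpha_H^{m(H)}S \text{ for all } H\in\mathcal{A},\ f_i\in S\}$. For fixed $H_0\in\mathcal{A}$, $D_0^p(\mathcal{A},m):=\{\delta\in D^p(\mathcal{A},m)\mid \delta(\alpha_{H_0},f_2,\ldots,f_p)=0 \text{ for all } f_i\in S\}$. The multi-Ziegler restriction $(\mathcal{A}^{H_0},m^{H_0})$ is the multiarrangement in $H_0$ given by $\mathcal{A}^{H_0}=\{H_0\cap H\mid H\in\mathcal{A}\setminus\{H_0\}\}$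 and $m^{H_0}(X)=\sum_{H\in\mathcal{A}_X\setminus\{H_0\}} m(H)$, where $\mathcal{A}_X=\{H\in\mathcal{A}\mid X\subseteq H\}$; its derivation modules $D^p(\mathcal{A}^{H_0},m^{H_0})$ are defined analogously over $\overline{S}=S/\alpha_{H_0}S$. Here $\delta|_{H_0}$ denotes the derivation over $\overline{S}$ obtained by reducing the values of $\delta$ modulo $\alpha_{H_0}$. *)

theory Defs
  imports "HOL-Library.Poly_Mapping"
begin

text \<open>Polynomial ring S = K[x_i | i :: 'n] (ell = CARD('n) variables), as finitely
  supported maps from monomials (exponent vectors) to coefficients.\<close>
type_synonym ('n, 'k) mpoly = "('n \<Rightarrow>\<^sub>0 nat) \<Rightarrow>\<^sub>0 'k"

definition const_poly :: "'k::zero \<Rightarrow> ('n, 'k) mpoly" where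
  "const_poly c = Poly_Mapping.single 0 c"

definition lin_poly :: "('n::finite \<Rightarrow> 'k::comm_ring_1) \<Rightarrow> ('n, 'k) mpoly" where
  "lin_poly a = (\<Sum>i\<in>UNIV. Poly_Mapping.single (Poly_Mapping.single i 1) (a i))"

definition lin_ker :: "('n::finite \<Rightarrow> 'k::comm_ring_1) \<Rightarrow> ('n \<Rightarrow> 'k) set" where
  "lin_ker a = {v. (\<Sum>i\<in>UNIV. a i * v i) = 0}"

text \<open>A p-derivation of the quotient ring S / a S, given on representatives:
  theta : S^p -> S (arguments as lists of length p) induces a well-defined map
  (S/aS)^p -> S/aS which is alternating, K-linear and a K-derivation in each argument.\<close>
definition der_mod :: "('n, 'k::field) mpoly \<Rightarrow> nat \<Rightarrow> (('n, 'k) mpoly list \<Rightarrow> ('n, 'k) mpoly) \<Rightarrow> bool" where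
  "der_mod a p \<theta> \<longleftrightarrow>
     (\<forall>fs gs. length fs = p \<and> length gs = p \<and> (\<forall>i<p. a dvd (fs ! i - gs ! i))
        \<longrightarrow> a dvd (\<theta> fs - \<theta> gs)) \<and>
     (\<forall>fs i f g (c::'k). length fs = p \<and> i < p \<longrightarrow>
        a dvd (\<theta> (fs[i := const_poly c * f + g]) - (const_poly c * \<theta> (fs[i := f]) + \<theta> (fs[i := g])))) \<and>
     (\<forall>fs i f g. length fs = p \<and> i < p \<longrightarrow>
        a dvd (\<theta> (fs[i := f * g]) - (f * \<theta> (fs[i := g]) + g * \<theta> (fs[i := f])))) \<and>
     (\<forall>fs i j. length fs = p \<and> i < p \<and> j < p \<and> i \<noteq> j \<and> fs ! i = fs ! j \<longrightarrow> a dvd \<theta> fs)"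

definition der_p :: "nat \<Rightarrow> (('n, 'k::field) mpoly list \<Rightarrow> ('n, 'k) mpoly) \<Rightarrow> bool" where
  "der_p p \<theta> \<longleftrightarrow>
     (\<forall>fs i f g (c::'k). length fs = p \<and> i < p \<longrightarrow>
        \<theta> (fs[i := const_poly c * f + g]) = const_poly c * \<theta> (fs[i := f]) + \<theta> (fs[i := g])) \<and>
     (\<forall>fs i f g. length fs = p \<and> i < p \<longrightarrow>
        \<theta> (fs[i := f * g]) = f * \<theta> (fs[i := g]) + g * \<theta> (fs[i := f])) \<and>
     (\<forall>fs i j. length fs = p \<and> i < p \<and> j < p \<and> i \<noteq> j \<and> fs ! i = fs ! j \<longrightarrow> \<theta> fs = 0)"

definition multiarr :: "('n::finite \<Rightarrow> 'k::field) set set \<Rightarrow> (('n \<Rightarrow> 'k) set \<Rightarrow> 'n \<Rightarrow> 'k)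
    \<Rightarrow> (('n \<Rightarrow> 'k) set \<Rightarrow> nat) \<Rightarrow> bool" where
  "multiarr A alpha m \<longleftrightarrow> finite A \<and>
     (\<forall>H\<in>A. (\<exists>i. alpha H i \<noteq> 0) \<and> H = lin_ker (alpha H) \<and> m H > 0)"

definition D_p :: "('n::finite \<Rightarrow> 'k::field) set set \<Rightarrow> (('n \<Rightarrow> 'k) set \<Rightarrow> 'n \<Rightarrow> 'k)
    \<Rightarrow> (('n \<Rightarrow> 'k) set \<Rightarrow> nat) \<Rightarrow> nat \<Rightarrow> (('n, 'k) mpoly list \<Rightarrow> ('n, 'k) mpoly) set" where
  "D_p A alpha m p = {\<theta>. der_p p \<theta> \<and>
     (\<forall>H\<in>A. \<forall>fs. length fs = p \<and> fs ! 0 = lin_poly (alpha H)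
         \<longrightarrow> lin_poly (alpha H) ^ m H dvd \<theta> fs)}"

definition D0_p :: "('n::finite \<Rightarrow> 'k::field) set set \<Rightarrow> (('n \<Rightarrow> 'k) set \<Rightarrow> 'n \<Rightarrow> 'k)
    \<Rightarrow> (('n \<Rightarrow> 'k) set \<Rightarrow> nat) \<Rightarrow> ('n \<Rightarrow> 'k) set \<Rightarrow> nat
    \<Rightarrow> (('n, 'k) mpoly list \<Rightarrow> ('n, 'k) mpoly) set" where
  "D0_p A alpha m H0 p = {\<delta>\<in>D_p A alpha m p.
     \<forall>fs. length fs = p \<and> fs ! 0 = lin_poly (alpha H0) \<longrightarrow> \<delta> fs = 0}"

definition restr_arr :: "('n \<Rightarrow> 'k) set set \<Rightarrow> ('n \<Rightarrow> 'k) set \<Rightarrow> ('n \<Rightarrow> 'k) set set" where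
  "restr_arr A H0 = {H0 \<inter> H | H. H \<in> A - {H0}}"

definition restr_mult :: "('n \<Rightarrow> 'k) set set \<Rightarrow> (('n \<Rightarrow> 'k) set \<Rightarrow> nat) \<Rightarrow> ('n \<Rightarrow> 'k) set
    \<Rightarrow> ('n \<Rightarrow> 'k) set \<Rightarrow> nat" where
  "restr_mult A m H0 X = (\<Sum>H\<in>{H\<in>A. X \<subseteq> H \<and> H \<noteq> H0}. m H)"

text \<open>D^p(A^{H0}, m^{H0}) over Sbar = S / alpha_{H0} S, expressed on representatives in S:
  theta (mod alpha_{H0}) is a p-derivation of Sbar, and for every X in A^{H0} and every
  linear form b on V whose restriction to H0 defines X (i.e. H0 \<inter> ker b = X; these give
  all defining linear forms of X in H0 and their linear lifts), theta(b, f2, ..., fp) lies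
  in b^{m^{H0}(X)} Sbar, i.e. in b^{m^{H0}(X)} S + alpha_{H0} S.\<close>
definition D_p_restr :: "('n::finite \<Rightarrow> 'k::field) set set \<Rightarrow> (('n \<Rightarrow> 'k) set \<Rightarrow> 'n \<Rightarrow> 'k)
    \<Rightarrow> (('n \<Rightarrow> 'k) set \<Rightarrow> nat) \<Rightarrow> ('n \<Rightarrow> 'k) set \<Rightarrow> nat
    \<Rightarrow> (('n, 'k) mpoly list \<Rightarrow> ('n, 'k) mpoly) set" where
  "D_p_restr A alpha m H0 p = {\<theta>. der_mod (lin_poly (alpha H0)) p \<theta> \<and>
     (\<forall>X\<in>restr_arr A H0. \<forall>b. H0 \<inter> lin_ker b = X \<longrightarrow>
        (\<forall>fs. length fs = p \<and> fs ! 0 = lin_poly b \<longrightarrow>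
           (\<exists>q r. \<theta> fs = lin_poly b ^ restr_mult A m H0 X * q + lin_poly (alpha H0) * r)))}"

end

theory Submission
  imports Defs
begin


lemma const_poly_mult: "const_poly (a * b) = (const_poly a * const_poly b :: ('n,'k::comm_ring_1) mpoly)"
  unfolding const_poly_def by (simp add: mult_single)
lemma const_poly_add: "const_poly (a + b) = (const_poly a + const_poly b :: ('n,'k::comm_ring_1) mpoly)"
  unfolding const_poly_def by (simp add: single_add)
lemma const_poly_0[simp]: "const_poly 0 = 0" unfolding const_poly_def by simp
lemma const_poly_1[simp]: "const_poly 1 = 1" unfolding const_poly_def by simp

definition mono_pow :: "('n::finite \<Rightarrow> 'r::comm_monoid_mult) \<Rightarrow> ('n \<Rightarrow>\<^sub>0 nat) \<Rightarrow> 'r" where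
  "mono_pow \<sigma> \<mu> = (\<Prod>i\<in>UNIV. \<sigma> i ^ Poly_Mapping.lookup \<mu> i)"

definition subst :: "('n::finite \<Rightarrow> ('m,'k::comm_ring_1) mpoly) \<Rightarrow> ('n,'k) mpoly \<Rightarrow> ('m,'k) mpoly" where
  "subst \<sigma> f = (\<Sum>\<mu>\<in>Poly_Mapping.keys f. const_poly (Poly_Mapping.lookup f \<mu>) * mono_pow \<sigma> \<mu>)"

lemma subst_alt:
  assumes "finite K" "Poly_Mapping.keys f \<subseteq> K"
  shows "subst \<sigma> f = (\<Sum>\<mu>\<in>K. const_poly (Poly_Mapping.lookup f \<mu>) * mono_pow \<sigma> \<mu>)"
  unfolding subst_def
  by (rule sum.mono_neutral_left) (use assms in \<open>auto simp: in_keys_iff\<close>)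

lemma subst_add: "subst \<sigma> (f + g) = subst \<sigma> f + subst \<sigma> g"
proof -
  let ?K = "Poly_Mapping.keys f \<union> Poly_Mapping.keys g"
  have "subst \<sigma> (f + g) = (\<Sum>\<mu>\<in>?K. const_poly (Poly_Mapping.lookup (f+g) \<mu>) * mono_pow \<sigma> \<mu>)"
    by (rule subst_alt[OF _ keys_add]) simp
  also have "\<dots> = (\<Sum>\<mu>\<in>?K. const_poly (Poly_Mapping.lookup f \<mu>) * mono_pow \<sigma> \<mu>) + (\<Sum>\<mu>\<in>?K. const_poly (Poly_Mapping.lookup g \<mu>) * mono_pow \<sigma> \<mu>)"
    by (simp add: lookup_add const_poly_add distrib_right sum.distrib)
  also have "\<dots> = subst \<sigma> f + subst \<sigma> g"
    using subst_alt[of "?K" f \<sigma>] subst_alt[of "?K" g \<sigma>] by simp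
  finally show ?thesis .
qed

lemma subst_0[simp]: "subst \<sigma> 0 = 0" unfolding subst_def by simp

lemma subst_sum: "subst \<sigma> (sum F S) = (\<Sum>x\<in>S. subst \<sigma> (F x))"
  by (induction S rule: infinite_finite_induct) (auto simp: subst_add)

lemma subst_uminus: "subst \<sigma> (- f) = - subst \<sigma> f"
  using subst_add[of \<sigma> "-f" f] by (simp add: eq_neg_iff_add_eq_0)

lemma subst_diff: "subst \<sigma> (f - g) = subst \<sigma> f - subst \<sigma> g"
  by (simp only: diff_conv_add_uminus subst_add subst_uminus)

lemma subst_single: "subst \<sigma> (Poly_Mapping.single \<mu> c) = const_poly c * mono_pow \<sigma> \<mu>"
  by (cases "c = 0") (simp_all add: subst_def)

lemma poly_expand: "f = (\<Sum>\<mu>\<in>Poly_Mapping.keys f. Poly_Mapping.single \<mu> (Poly_Mapping.lookup f \<mu>))"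
  by (rule poly_mapping_eqI) (auto simp: lookup_sum lookup_single when_def in_keys_iff)

lemma mono_pow_add: "mono_pow \<sigma> (\<mu> + \<nu>) = mono_pow \<sigma> \<mu> * mono_pow \<sigma> \<nu>"
  unfolding mono_pow_def by (simp add: lookup_add power_add prod.distrib)

lemma subst_mult: "subst \<sigma> (f * g) = subst \<sigma> f * subst \<sigma> g"
proof -
  have "f * g = (\<Sum>\<mu>\<in>Poly_Mapping.keys f. Poly_Mapping.single \<mu> (Poly_Mapping.lookup f \<mu>)) * (\<Sum>\<nu>\<in>Poly_Mapping.keys g. Poly_Mapping.single \<nu> (Poly_Mapping.lookup g \<nu>))"
    by (simp only: poly_expand[symmetric])
  also have "\<dots> = (\<Sum>\<mu>\<in>Poly_Mapping.keys f. \<Sum>\<nu>\<in>Poly_Mapping.keys g. Poly_Mapping.single (\<mu>+\<nu>) (Poly_Mapping.lookup f \<mu> * Poly_Mapping.lookup g \<nu>))"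
    by (simp add: sum_product mult_single)
  finally have "subst \<sigma> (f*g) = (\<Sum>\<mu>\<in>Poly_Mapping.keys f. \<Sum>\<nu>\<in>Poly_Mapping.keys g. const_poly (Poly_Mapping.lookup f \<mu> * Poly_Mapping.lookup g \<nu>) * mono_pow \<sigma> (\<mu>+\<nu>))"
    by (simp add: subst_sum subst_single)
  also have "\<dots> = (\<Sum>\<mu>\<in>Poly_Mapping.keys f. \<Sum>\<nu>\<in>Poly_Mapping.keys g. const_poly (Poly_Mapping.lookup f \<mu>) * mono_pow \<sigma> \<mu> * (const_poly (Poly_Mapping.lookup g \<nu>) * mono_pow \<sigma> \<nu>))"
    by (intro sum.cong refl) (simp only: const_poly_mult mono_pow_add ac_simps)
  also have "\<dots> = subst \<sigma> f * subst \<sigma> g"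
    by (simp only: subst_def sum_product)
  finally show ?thesis .
qed

lemma subst_const: "subst \<sigma> (const_poly c) = const_poly c"
  by (simp add: const_poly_def subst_single mono_pow_def)

lemma subst_power: "subst \<sigma> (f ^ n) = subst \<sigma> f ^ n"
  by (induction n) (simp_all add: subst_mult subst_const[of _ 1, simplified])



definition Xv :: "'m \<Rightarrow> ('m,'k::comm_ring_1) mpoly" where
  "Xv j = Poly_Mapping.single (Poly_Mapping.single j 1) 1"

lemma Xv_power: "Xv j ^ n = (Poly_Mapping.single (Poly_Mapping.single j n) 1 :: ('m,'k::comm_ring_1) mpoly)"
  by (induction n) (simp_all add: Xv_def mult_single single_add[symmetric] mult.commute)

lemma prod_single_1: "(\<Prod>i\<in>S. Poly_Mapping.single (k i) (1::'k::comm_ring_1)) = Poly_Mapping.single (sum k S) 1"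
  by (induction S rule: infinite_finite_induct) (simp_all add: mult_single add.commute)

definition Em :: "('n \<Rightarrow> nat) \<Rightarrow> ('n::finite \<Rightarrow>\<^sub>0 nat) \<Rightarrow> (nat \<Rightarrow>\<^sub>0 nat)" where
  "Em e \<mu> = (\<Sum>i\<in>UNIV. Poly_Mapping.single (e i) (Poly_Mapping.lookup \<mu> i))"

lemma lookup_Em: "inj e \<Longrightarrow> Poly_Mapping.lookup (Em e \<mu>) (e i) = Poly_Mapping.lookup \<mu> i"
  unfolding Em_def lookup_sum
  by (simp add: lookup_single when_def inj_eq)

lemma Em_inj: "inj e \<Longrightarrow> Em e \<mu> = Em e \<nu> \<Longrightarrow> \<mu> = \<nu>"
  by (rule poly_mapping_eqI) (metis lookup_Em)

lemma mono_pow_Xv: "mono_pow (\<lambda>i. Xv (e i) :: (nat,'k::comm_ring_1) mpoly) \<mu> = Poly_Mapping.single (Em e \<mu>) 1"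
  unfolding mono_pow_def Xv_power prod_single_1 Em_def ..

lemma const_mult_single: "const_poly c * Poly_Mapping.single k 1 = Poly_Mapping.single k (c::'k::comm_ring_1)"
  unfolding const_poly_def by (simp add: mult_single)

lemma E_lookup:
  assumes "inj e"
  shows "Poly_Mapping.lookup (subst (\<lambda>i. Xv (e i) :: (nat,'k::comm_ring_1) mpoly) f) (Em e \<nu>) = Poly_Mapping.lookup f \<nu>"
proof -
  have "Poly_Mapping.lookup (subst (\<lambda>i. Xv (e i) :: (nat,'k) mpoly) f) (Em e \<nu>)
      = (\<Sum>\<mu>\<in>Poly_Mapping.keys f. (Poly_Mapping.lookup f \<mu> when Em e \<mu> = Em e \<nu>))"
    unfolding subst_def mono_pow_Xv const_mult_single lookup_sum lookup_single ..
  also have "\<dots> = (\<Sum>\<mu>\<in>Poly_Mapping.keys f. (Poly_Mapping.lookup f \<mu> when \<mu> = \<nu>))"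
    using Em_inj[OF assms] by (intro sum.cong) (auto simp: when_def)
  also have "\<dots> = Poly_Mapping.lookup f \<nu>"
    by (simp add: when_def in_keys_iff)
  finally show ?thesis .
qed

lemma mpoly_no_zero_div:
  fixes f g :: "('n::finite, 'k::field) mpoly"
  assumes "f * g = 0"
  shows "f = 0 \<or> g = 0"
proof -
  obtain e :: "'n \<Rightarrow> nat" and n where "e ` UNIV = {i. i < n}" "inj e"
    using finite_imp_inj_to_nat_seg[of "UNIV :: 'n set"] by auto
  let ?E = "subst (\<lambda>i. Xv (e i) :: (nat,'k) mpoly)"
  have "?E f * ?E g = 0" using assms by (simp add: subst_mult[symmetric])
  hence "?E f = 0 \<or> ?E g = 0" by simp
  moreover have "?E h = 0 \<Longrightarrow> h = 0" for h
    by (rule poly_mapping_eqI) (metis E_lookup[OF \<open>inj e\<close>] lookup_zero)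
  ultimately show ?thesis by blast
qed



lemma lin_poly_alt: "lin_poly a = (\<Sum>i\<in>UNIV. const_poly (a i) * Xv i)"
  unfolding lin_poly_def Xv_def const_mult_single ..

lemma single_1_eq: "Poly_Mapping.single i (1::nat) = Poly_Mapping.single j 1 \<longleftrightarrow> i = j"
  by (metis lookup_single_eq lookup_single_not_eq zero_neq_one)

lemma lookup_lin: "Poly_Mapping.lookup (lin_poly a) (Poly_Mapping.single j 1) = a j"
  unfolding lin_poly_def lookup_sum lookup_single when_def single_1_eq by simp

lemma lin_poly_eq0: "lin_poly a = 0 \<Longrightarrow> a j = 0"
  by (metis lookup_lin lookup_zero)

lemma lin_poly_comb: "lin_poly (\<lambda>i. c * a i + d * b i) = const_poly c * lin_poly a + const_poly d * lin_poly b"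
  unfolding lin_poly_alt by (simp add: sum_distrib_left sum.distrib const_poly_add const_poly_mult algebra_simps)

lemma mono_pow_single: "mono_pow \<sigma> (Poly_Mapping.single i 1) = \<sigma> i"
proof -
  have "mono_pow \<sigma> (Poly_Mapping.single i 1) = (\<Prod>j\<in>UNIV. if j = i then \<sigma> i else 1)"
    unfolding mono_pow_def by (intro prod.cong) (auto simp: lookup_single when_def)
  thus ?thesis by simp
qed

lemma subst_Xv: "subst \<sigma> (Xv i) = \<sigma> i"
  unfolding Xv_def subst_single mono_pow_single by simp

lemma subst_lin: "subst \<sigma> (lin_poly a) = (\<Sum>i\<in>UNIV. const_poly (a i) * \<sigma> i)"
  unfolding lin_poly_alt subst_sum subst_mult subst_const subst_Xv ..

lemma mono_pow_Xv_id: "mono_pow Xv \<mu> = (Poly_Mapping.single \<mu> 1 :: ('n::finite,'k::comm_ring_1) mpoly)"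
proof -
  have "\<mu> = (\<Sum>i\<in>UNIV. Poly_Mapping.single i (Poly_Mapping.lookup \<mu> i))"
    by (rule poly_mapping_eqI) (simp add: lookup_sum lookup_single when_def)
  thus ?thesis unfolding mono_pow_def Xv_power prod_single_1 by simp
qed

lemma subst_Xv_id: "subst Xv f = f"
proof -
  have "subst Xv f = (\<Sum>\<mu>\<in>Poly_Mapping.keys f. Poly_Mapping.single \<mu> (Poly_Mapping.lookup f \<mu>))"
    unfolding subst_def mono_pow_Xv_id const_mult_single ..
  thus ?thesis using poly_expand[of f] by simp
qed

lemma dvd_prod_diff:
  fixes x y :: "'i \<Rightarrow> 'r::comm_ring_1"
  shows "(\<And>i. i \<in> S \<Longrightarrow> l dvd x i - y i) \<Longrightarrow> l dvd prod x S - prod y S"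
proof (induction S rule: infinite_finite_induct)
  case (insert i F)
  have "prod x (insert i F) - prod y (insert i F) = x i * (prod x F - prod y F) + (x i - y i) * prod y F"
    using insert by (simp add: algebra_simps)
  thus ?case using insert by (simp add: dvd_add dvd_mult)
qed auto

lemma dvd_power_diff: "(l::'r::comm_ring_1) dvd x - y \<Longrightarrow> l dvd x ^ n - y ^ n"
  using dvd_prod_diff[of "{..<n}" l "\<lambda>_. x" "\<lambda>_. y"] by simp

lemma subst_cong:
  assumes "\<And>i. l dvd \<sigma> i - \<tau> i"
  shows "l dvd subst \<sigma> f - subst \<tau> f"
proof -
  have "subst \<sigma> f - subst \<tau> f = (\<Sum>\<mu>\<in>Poly_Mapping.keys f. const_poly (Poly_Mapping.lookup f \<mu>) * (mono_pow \<sigma> \<mu> - mono_pow \<tau> \<mu>))"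
    unfolding subst_def by (simp add: sum_subtractf algebra_simps)
  moreover have "l dvd mono_pow \<sigma> \<mu> - mono_pow \<tau> \<mu>" for \<mu>
    unfolding mono_pow_def by (rule dvd_prod_diff) (simp add: dvd_power_diff assms)
  ultimately show ?thesis by (simp add: dvd_sum dvd_mult)
qed

definition sig :: "('n::finite \<Rightarrow> 'k::field) \<Rightarrow> 'n \<Rightarrow> 'n \<Rightarrow> ('n,'k) mpoly" where
  "sig a k i = (if i = k then Xv k - const_poly (1 / a k) * lin_poly a else Xv i)"

lemma subst_sig_lin:
  assumes "a k \<noteq> 0"
  shows "subst (sig a k) (lin_poly a) = 0"
proof -
  have "subst (sig a k) (lin_poly a) = (\<Sum>i\<in>UNIV. const_poly (a i) * Xv i - (if i = k then const_poly (a k) * const_poly (1 / a k) * lin_poly a else 0))"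
    unfolding subst_lin sig_def by (intro sum.cong) (auto simp: algebra_simps)
  also have "\<dots> = (\<Sum>i\<in>UNIV. const_poly (a i) * Xv i) - const_poly (a k) * const_poly (1 / a k) * lin_poly a"
    by (simp only: sum_subtractf) simp
  also have "\<dots> = lin_poly a - const_poly (a k * (1 / a k)) * lin_poly a"
    by (simp only: lin_poly_alt[symmetric] const_poly_mult)
  also have "\<dots> = 0" using assms by simp
  finally show ?thesis .
qed

lemma subst_sig_lin0:
  assumes "g k = 0"
  shows "subst (sig a k) (lin_poly g) = lin_poly g"
proof -
  have "subst (sig a k) (lin_poly g) = (\<Sum>i\<in>UNIV. const_poly (g i) * sig a k i)"
    by (rule subst_lin)
  also have "\<dots> = (\<Sum>i\<in>UNIV. const_poly (g i) * Xv i)"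
    using assms by (intro sum.cong) (auto simp: sig_def)
  finally show ?thesis by (simp only: lin_poly_alt[symmetric])
qed

lemma lin_dvd_subst_diff:
  fixes a :: "'n::finite \<Rightarrow> 'k::field"
  assumes "a k \<noteq> 0"
  shows "lin_poly a dvd f - subst (sig a k) f"
proof -
  have "lin_poly a dvd subst Xv f - subst (sig a k) f"
    by (rule subst_cong) (auto simp: sig_def)
  thus ?thesis by (simp add: subst_Xv_id)
qed

lemma lin_prime:
  fixes a :: "'n::finite \<Rightarrow> 'k::field"
  assumes "a k \<noteq> 0" "lin_poly a dvd f * g"
  shows "lin_poly a dvd f \<or> lin_poly a dvd g"
proof -
  obtain h where "f * g = lin_poly a * h" using assms(2) by (auto elim: dvdE)
  hence "subst (sig a k) f * subst (sig a k) g = 0"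
    by (metis subst_mult subst_sig_lin[of a k, OF assms(1)] mult_zero_left)
  hence "subst (sig a k) f = 0 \<or> subst (sig a k) g = 0" by (rule mpoly_no_zero_div)
  thus ?thesis using lin_dvd_subst_diff[of a k f, OF assms(1)] lin_dvd_subst_diff[of a k g, OF assms(1)] by auto
qed

lemma lin_dvd_lin:
  fixes a :: "'n::finite \<Rightarrow> 'k::field"
  assumes "a k \<noteq> 0" "lin_poly a dvd lin_poly b"
  shows "\<forall>i. b i = (b k / a k) * a i"
proof -
  define g where "g = (\<lambda>i. 1 * b i + (- (b k / a k)) * a i)"
  have gk: "g k = 0" using assms(1) by (simp add: g_def)
  have "lin_poly g = const_poly 1 * lin_poly b + const_poly (- (b k / a k)) * lin_poly a"
    unfolding g_def by (rule lin_poly_comb)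
  hence "lin_poly a dvd lin_poly g" using assms(2) by simp
  then obtain q where q: "lin_poly g = lin_poly a * q" by (auto elim: dvdE)
  have "lin_poly g = subst (sig a k) (lin_poly g)" using subst_sig_lin0[of g k a, OF gk] by simp
  also have "\<dots> = 0" unfolding q subst_mult subst_sig_lin[of a k, OF assms(1)] by simp
  finally have "lin_poly g = 0" .
  hence g0: "\<And>i. g i = 0" by (rule lin_poly_eq0)
  show ?thesis
  proof
    fix i
    have "1 * b i + - (b k / a k) * a i = 0" using g0[of i] unfolding g_def .
    thus "b i = b k / a k * a i"
      by (metis add_uminus_conv_diff right_minus_eq mult_1 minus_mult_left)
  qed
qed



context
  fixes p :: nat and \<delta> :: "('n::finite, 'k::field) mpoly list \<Rightarrow> ('n, 'k) mpoly"
  assumes der: "der_p p \<delta>"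
begin

lemma der_lin: "length fs = p \<Longrightarrow> i < p \<Longrightarrow>
   \<delta> (fs[i := const_poly c * f + g]) = const_poly c * \<delta> (fs[i := f]) + \<delta> (fs[i := g])"
  using der unfolding der_p_def by blast

lemma der_leib: "length fs = p \<Longrightarrow> i < p \<Longrightarrow>
   \<delta> (fs[i := f * g]) = f * \<delta> (fs[i := g]) + g * \<delta> (fs[i := f])"
  using der unfolding der_p_def by blast

lemma der_alt: "length fs = p \<Longrightarrow> i < p \<Longrightarrow> j < p \<Longrightarrow> i \<noteq> j \<Longrightarrow> fs ! i = fs ! j \<Longrightarrow> \<delta> fs = 0"
  using der unfolding der_p_def by blast

lemma der_add: "length fs = p \<Longrightarrow> i < p \<Longrightarrow> \<delta> (fs[i := f + g]) = \<delta> (fs[i := f]) + \<delta> (fs[i := g])"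
  using der_lin[of fs i 1 f g] by simp

lemma der_zero: "length fs = p \<Longrightarrow> i < p \<Longrightarrow> \<delta> (fs[i := 0]) = 0"
  using der_add[of fs i 0 0] by simp

lemma der_diff: "length fs = p \<Longrightarrow> i < p \<Longrightarrow> \<delta> (fs[i := f - g]) = \<delta> (fs[i := f]) - \<delta> (fs[i := g])"
  using der_add[of fs i "f - g" g] by simp

lemma der_scal: "length fs = p \<Longrightarrow> i < p \<Longrightarrow> \<delta> (fs[i := const_poly c * f]) = const_poly c * \<delta> (fs[i := f])"
  using der_lin[of fs i c f 0] der_zero[of fs i] by simp

lemma der_swap:
  assumes "length fs = p" "i < p" "j < p" "i \<noteq> j"
  shows "\<delta> (fs[i := f, j := g]) = - \<delta> (fs[i := g, j := f])"
proof -
  define F where "F u v = \<delta> (fs[i := u, j := v])" for u v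
  have addi: "F (u + u') v = F u v + F u' v" for u u' v
  proof -
    have "fs[i := w, j := v] = (fs[j := v])[i := w]" for w
      using assms(4) by (simp add: list_update_swap)
    thus ?thesis unfolding F_def using der_add[of "fs[j := v]" i u u'] assms by simp
  qed
  have addj: "F u (v + v') = F u v + F u v'" for u v v'
    unfolding F_def using der_add[of "fs[i := u]" j v v'] assms by simp
  have z: "F u u = 0" for u
    unfolding F_def using assms by (intro der_alt[of _ i j]) auto
  have "0 = F (f + g) (f + g)" by (simp add: z)
  also have "\<dots> = F f g + F g f" by (simp only: addi addj) (simp add: z)
  finally have "F f g + F g f = 0" by simp
  hence "F f g = - F g f" by (simp add: eq_neg_iff_add_eq_0)
  thus ?thesis unfolding F_def .
qed

lemma der_at_any:
  assumes D0: "\<And>fs. length fs = p \<and> fs ! 0 = l \<longrightarrow> \<delta> fs = 0"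
    and "length gs = p" "i < p" "gs ! i = l"
  shows "\<delta> gs = 0"
proof (cases "i = 0")
  case True thus ?thesis using D0 assms by blast
next
  case False
  have p0: "0 < p" using assms by simp
  have "gs = gs[0 := gs ! 0, i := l]" using assms by (metis list_update_id)
  hence "\<delta> gs = - \<delta> (gs[0 := l, i := gs ! 0])"
    using der_swap[of gs 0 i "gs ! 0" l] assms False p0 by simp
  also have "\<delta> (gs[0 := l, i := gs ! 0]) = 0"
    using D0 assms False by simp
  finally show ?thesis by simp
qed

lemma der_cong1:
  assumes D0: "\<And>fs. length fs = p \<and> fs ! 0 = l \<longrightarrow> \<delta> fs = 0"
    and "length fs = p" "i < p" "l dvd f - g"
  shows "l dvd \<delta> (fs[i := f]) - \<delta> (fs[i := g])"
proof -
  obtain h where h: "f - g = l * h" using assms(4) by (auto elim: dvdE)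
  have e: "\<delta> (fs[i := f]) - \<delta> (fs[i := g]) = l * \<delta> (fs[i := h]) + h * \<delta> (fs[i := l])"
    using der_diff[of fs i f g] der_leib[of fs i l h] assms h by simp
  have z: "\<delta> (fs[i := l]) = 0"
    using der_at_any[OF D0, of "fs[i := l]" i] assms by simp
  show ?thesis unfolding e z by simp
qed

lemma der_cong:
  assumes D0: "\<And>fs. length fs = p \<and> fs ! 0 = l \<longrightarrow> \<delta> fs = 0"
    and len: "length fs = p" "length gs = p" and d: "\<forall>i<p. l dvd (fs ! i - gs ! i)"
  shows "l dvd \<delta> fs - \<delta> gs"
proof -
  define hs where "hs k = take k gs @ drop k fs" for k
  have "k \<le> p \<Longrightarrow> l dvd \<delta> fs - \<delta> (hs k)" for k
  proof (induction k)
    case 0 thus ?case by (simp add: hs_def)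
  next
    case (Suc k)
    hence kp: "k < p" by simp
    have e1: "hs k = take k gs @ fs ! k # drop (Suc k) fs"
      unfolding hs_def using kp len by (simp add: Cons_nth_drop_Suc)
    have e2: "hs (Suc k) = take k gs @ gs ! k # drop (Suc k) fs"
      unfolding hs_def using kp len by (simp add: take_Suc_conv_app_nth)
    have lk: "length (take k gs) = k" using kp len by simp
    have u1: "hs k = (hs k)[k := fs ! k]" by (metis e1 lk list_update_length)
    have u2: "hs (Suc k) = (hs k)[k := gs ! k]" by (metis e1 e2 lk list_update_length)
    have lh: "length (hs k) = p" using kp len by (simp add: hs_def)
    have "l dvd \<delta> ((hs k)[k := fs ! k]) - \<delta> ((hs k)[k := gs ! k])"
      by (rule der_cong1[OF D0]) (use lh kp d in simp_all)
    hence B: "l dvd \<delta> (hs k) - \<delta> (hs (Suc k))" using u1 u2 by simp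
    have A: "l dvd \<delta> fs - \<delta> (hs k)" using Suc by simp
    show ?case using dvd_add[OF A B] by simp
  qed
  moreover have "hs p = gs" using len by (simp add: hs_def)
  ultimately show ?thesis using len(2) by auto
qed

lemma der_mod_of_der:
  assumes D0: "\<And>fs. length fs = p \<and> fs ! 0 = l \<longrightarrow> \<delta> fs = 0"
  shows "der_mod l p \<delta>"
  unfolding der_mod_def
proof (intro conjI allI impI)
  fix fs gs :: "('n,'k) mpoly list" assume "length fs = p \<and> length gs = p \<and> (\<forall>i<p. l dvd fs ! i - gs ! i)"
  thus "l dvd \<delta> fs - \<delta> gs" using der_cong[OF D0] by blast
next
  fix fs :: "('n,'k) mpoly list" and i f g and c :: 'k assume "length fs = p \<and> i < p"
  thus "l dvd \<delta> (fs[i := const_poly c * f + g]) - (const_poly c * \<delta> (fs[i := f]) + \<delta> (fs[i := g]))"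
    using der_lin by simp
next
  fix fs :: "('n,'k) mpoly list" and i f g assume "length fs = p \<and> i < p"
  thus "l dvd \<delta> (fs[i := f * g]) - (f * \<delta> (fs[i := g]) + g * \<delta> (fs[i := f]))"
    using der_leib by simp
next
  fix fs :: "('n,'k) mpoly list" and i j assume "length fs = p \<and> i < p \<and> j < p \<and> i \<noteq> j \<and> fs ! i = fs ! j"
  thus "l dvd \<delta> fs" using der_alt by (metis dvd_0_right)
qed

end



lemma sum3_0: "x + y + z = (0::'a::ab_group_add) \<Longrightarrow> x = - y - z"
proof -
  assume "x + y + z = 0"
  hence "x = - (y + z)" by (simp only: add.assoc eq_neg_iff_add_eq_0)
  thus ?thesis by (simp only: minus_add_distrib diff_conv_add_uminus)
qed

lemma alg_key:
  fixes ci cj ck ai aj ak bi bj :: "'k::field"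
  assumes ak: "ak \<noteq> 0" and bj: "bj \<noteq> 0"
  and E: "ci + cj * (- (bi / bj)) + ck * (- (ai + (- (bi / bj)) * aj) / ak) = 0"
  shows "ci = (cj - (ck / ak) * aj) / bj * bi + (ck / ak) * ai"
proof -
  have "ci = - (cj * (- (bi / bj))) - ck * (- (ai + (- (bi / bj)) * aj) / ak)"
    using sum3_0[OF E] .
  also have "\<dots> = (cj - (ck / ak) * aj) / bj * bi + (ck / ak) * ai"
    using ak bj by (simp add: field_simps)
  finally show ?thesis .
qed

lemma dot3:
  fixes a :: "'n::finite \<Rightarrow> 'k::field"
  assumes "i \<noteq> j" "i \<noteq> k" "j \<noteq> k"
  shows "(\<Sum>x\<in>UNIV. a x * ((if x = i then \<alpha> else 0) + (if x = j then \<beta> else 0) + (if x = k then \<gamma> else 0)))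
       = a i * \<alpha> + a j * \<beta> + a k * \<gamma>"
proof -
  have "(\<Sum>x\<in>UNIV. a x * ((if x = i then \<alpha> else 0) + (if x = j then \<beta> else 0) + (if x = k then \<gamma> else 0)))
     = (\<Sum>x\<in>UNIV. (if x = i then a i * \<alpha> else 0)) + (\<Sum>x\<in>UNIV. (if x = j then a j * \<beta> else 0)) + (\<Sum>x\<in>UNIV. (if x = k then a k * \<gamma> else 0))"
    by (simp only: sum.distrib[symmetric]) (intro sum.cong refl, auto simp: algebra_simps)
  thus ?thesis by simp
qed

lemma dot2:
  fixes a :: "'n::finite \<Rightarrow> 'k::field"
  assumes "i \<noteq> k"
  shows "(\<Sum>x\<in>UNIV. a x * ((if x = i then \<alpha> else 0) + (if x = k then \<gamma> else 0)))
       = a i * \<alpha> + a k * \<gamma>"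
proof -
  have "(\<Sum>x\<in>UNIV. a x * ((if x = i then \<alpha> else 0) + (if x = k then \<gamma> else 0)))
     = (\<Sum>x\<in>UNIV. (if x = i then a i * \<alpha> else 0)) + (\<Sum>x\<in>UNIV. (if x = k then a k * \<gamma> else 0))"
    by (simp only: sum.distrib[symmetric]) (intro sum.cong refl, auto simp: algebra_simps)
  thus ?thesis by simp
qed

lemma ker_L0:
  fixes a c :: "'n::finite \<Rightarrow> 'k::field"
  assumes ak: "a k \<noteq> 0" and sub: "lin_ker a \<subseteq> lin_ker c"
  shows "c i = (c k / a k) * a i"
proof (cases "i = k")
  case True thus ?thesis using ak by simp
next
  case False
  define v where "v = (\<lambda>x. (if x = i then 1 else 0) + (if x = k then - (a i / a k) else 0) :: 'k)"
  have "(\<Sum>x\<in>UNIV. a x * v x) = a i * 1 + a k * (- (a i / a k))"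
    unfolding v_def by (rule dot2[OF False])
  hence "v \<in> lin_ker a" using ak by (simp add: lin_ker_def)
  hence "v \<in> lin_ker c" using sub by blast
  moreover have "(\<Sum>x\<in>UNIV. c x * v x) = c i * 1 + c k * (- (a i / a k))"
    unfolding v_def by (rule dot2[OF False])
  ultimately have "c i * 1 + c k * (- (a i / a k)) = 0" by (simp add: lin_ker_def)
  thus ?thesis using ak by (simp add: field_simps)
qed

lemma ker_L:
  fixes a b c :: "'n::finite \<Rightarrow> 'k::field"
  assumes ak: "a k \<noteq> 0" and sub: "lin_ker a \<inter> lin_ker b \<subseteq> lin_ker c"
  shows "\<exists>s t. \<forall>i. c i = s * b i + t * a i"
proof -
  define b' where "b' = (\<lambda>i. b i - (b k / a k) * a i)"
  have b'k: "b' k = 0" using ak by (simp add: b'_def)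
  have dotb: "(\<Sum>x\<in>UNIV. b x * v x) = (\<Sum>x\<in>UNIV. b' x * v x) + (b k / a k) * (\<Sum>x\<in>UNIV. a x * v x)" for v
    unfolding sum_distrib_left sum.distrib[symmetric] by (intro sum.cong refl) (simp add: b'_def algebra_simps)
  show ?thesis
  proof (cases "\<forall>j. b' j = 0")
    case True
    have "lin_ker a \<subseteq> lin_ker c"
    proof
      fix v assume "v \<in> lin_ker a"
      hence "v \<in> lin_ker b" using dotb[of v] True by (simp add: lin_ker_def)
      thus "v \<in> lin_ker c" using sub \<open>v \<in> lin_ker a\<close> by blast
    qed
    hence ac: "lin_ker a \<subseteq> lin_ker c" .
    have "\<forall>i. c i = 0 * b i + (c k / a k) * a i"
    proof
      fix i
      have "c i = (c k / a k) * a i" by (rule ker_L0[OF ak ac])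
      thus "c i = 0 * b i + (c k / a k) * a i" by simp
    qed
    thus ?thesis by blast
  next
    case False
    then obtain j where bj: "b' j \<noteq> 0" by blast
    have jk: "j \<noteq> k" using bj b'k by auto
    define lam where "lam = (c j - (c k / a k) * a j) / b' j"
    have key: "c i = lam * b' i + (c k / a k) * a i" for i
    proof -
      consider "i = k" | "i = j" | "i \<noteq> j" "i \<noteq> k" by blast
      thus ?thesis
      proof cases
        case 1 thus ?thesis using ak b'k by simp
      next
        case 2 thus ?thesis using bj by (simp add: lam_def field_simps)
      next
        case 3
        define \<beta> where "\<beta> = - (b' i / b' j)"
        define \<gamma> where "\<gamma> = - (a i + \<beta> * a j) / a k"
        define v where "v = (\<lambda>x. (if x = i then 1 else 0) + (if x = j then \<beta> else 0) + (if x = k then \<gamma> else 0) :: 'k)"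
        have da: "(\<Sum>x\<in>UNIV. a x * v x) = a i * 1 + a j * \<beta> + a k * \<gamma>"
          unfolding v_def using 3 jk by (intro dot3) auto
        have db': "(\<Sum>x\<in>UNIV. b' x * v x) = b' i * 1 + b' j * \<beta> + b' k * \<gamma>"
          unfolding v_def using 3 jk by (intro dot3) auto
        have dc: "(\<Sum>x\<in>UNIV. c x * v x) = c i * 1 + c j * \<beta> + c k * \<gamma>"
          unfolding v_def using 3 jk by (intro dot3) auto
        have a0: "(\<Sum>x\<in>UNIV. a x * v x) = 0" unfolding da \<gamma>_def using ak by (simp add: field_simps)
        have b0: "(\<Sum>x\<in>UNIV. b' x * v x) = 0" unfolding db' \<beta>_def using bj b'k by (simp add: field_simps)
        have "v \<in> lin_ker a \<inter> lin_ker b" using a0 b0 dotb[of v] by (simp add: lin_ker_def)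
        hence "(\<Sum>x\<in>UNIV. c x * v x) = 0" using sub by (auto simp: lin_ker_def)
        hence "c i + c j * \<beta> + c k * \<gamma> = 0" using dc by simp
        thus ?thesis unfolding lam_def \<beta>_def \<gamma>_def by (rule alg_key[OF ak bj])
      qed
    qed
    have "\<forall>i. c i = lam * b i + (c k / a k - lam * (b k / a k)) * a i"
      using key by (simp add: b'_def algebra_simps)
    thus ?thesis by blast
  qed
qed



definition lprime :: "('n::finite,'k::field) mpoly \<Rightarrow> bool" where
  "lprime l \<longleftrightarrow> l \<noteq> 0 \<and> \<not> l dvd 1 \<and> (\<forall>f g. l dvd f * g \<longrightarrow> l dvd f \<or> l dvd g)"

lemma lin_lprime:
  fixes a :: "'n::finite \<Rightarrow> 'k::field"
  assumes "a k \<noteq> 0"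
  shows "lprime (lin_poly a)"
  unfolding lprime_def
proof (intro conjI allI impI)
  show "lin_poly a \<noteq> 0" using assms lin_poly_eq0 by blast
  show "\<not> lin_poly a dvd 1"
  proof
    assume "lin_poly a dvd 1"
    then obtain q where q: "lin_poly a * q = 1" by (auto elim: dvdE)
    have "(1::('n,'k) mpoly) = subst (sig a k) (lin_poly a * q)"
      using q subst_const[of "sig a k" 1] by simp
    also have "\<dots> = 0" by (simp add: subst_mult subst_sig_lin[of a k, OF assms])
    finally show False by simp
  qed
  fix f g assume "lin_poly a dvd f * g"
  thus "lin_poly a dvd f \<or> lin_poly a dvd g" by (rule lin_prime[of a k, OF assms])
qed

lemma mult_cancel_poly:
  fixes l x y :: "('n::finite,'k::field) mpoly"
  assumes "l \<noteq> 0" "l * x = l * y"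
  shows "x = y"
proof -
  have "l * (x - y) = 0" using assms(2) by (simp add: algebra_simps)
  thus ?thesis using mpoly_no_zero_div assms(1) by fastforce
qed

lemma pow_cancel:
  fixes l u :: "('n::finite,'k::field) mpoly"
  assumes "lprime l" "\<not> l dvd u"
  shows "l ^ n dvd u * g \<Longrightarrow> l ^ n dvd g"
proof (induction n arbitrary: g)
  case 0 thus ?case by simp
next
  case (Suc n)
  have "l dvd u * g" using Suc.prems by (metis dvd_mult_left power_Suc)
  hence "l dvd g" using assms unfolding lprime_def by blast
  then obtain g' where g: "g = l * g'" by (auto elim: dvdE)
  obtain z where z: "u * g = l ^ Suc n * z" using Suc.prems by (auto elim: dvdE)
  have "l * (u * g') = l * (l ^ n * z)" using z g by (simp add: algebra_simps)
  hence "u * g' = l ^ n * z" using assms(1) mult_cancel_poly unfolding lprime_def by blast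
  hence "l ^ n dvd u * g'" by simp
  hence "l ^ n dvd g'" by (rule Suc.IH)
  thus ?case using g by (simp add: mult_dvd_mono)
qed

lemma lprime_dvd_prod:
  fixes L :: "'x \<Rightarrow> ('n::finite,'k::field) mpoly"
  assumes "lprime l" "finite F" "l dvd (\<Prod>x\<in>F. L x ^ e x)"
  shows "\<exists>x\<in>F. l dvd L x"
  using assms(2,3)
proof (induction F rule: finite_induct)
  case empty thus ?case using assms(1) unfolding lprime_def by simp
next
  case (insert x F)
  hence "l dvd L x ^ e x * (\<Prod>x\<in>F. L x ^ e x)" by simp
  hence "l dvd L x ^ e x \<or> l dvd (\<Prod>x\<in>F. L x ^ e x)" using assms(1) unfolding lprime_def by blast
  moreover have "l dvd L x ^ n \<Longrightarrow> l dvd L x" for n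
  proof (induction n)
    case 0 thus ?case using assms(1) unfolding lprime_def by simp
  next
    case (Suc n) thus ?case using assms(1) unfolding lprime_def by (simp add: power_Suc) blast
  qed
  ultimately show ?case using insert by blast
qed

lemma prod_dvd:
  fixes L :: "'x \<Rightarrow> ('n::finite,'k::field) mpoly"
  assumes "finite B" "\<forall>x\<in>B. lprime (L x)"
    and "\<forall>x\<in>B. \<forall>y\<in>B. x \<noteq> y \<longrightarrow> \<not> L x dvd L y"
    and "\<forall>x\<in>B. L x ^ e x dvd f"
  shows "(\<Prod>x\<in>B. L x ^ e x) dvd f"
  using assms
proof (induction B rule: finite_induct)
  case empty thus ?case by simp
next
  case (insert x F)
  hence "(\<Prod>x\<in>F. L x ^ e x) dvd f" by blast
  then obtain g where g: "f = (\<Prod>x\<in>F. L x ^ e x) * g" by (auto elim: dvdE)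
  have nd0: "\<forall>y\<in>F. \<not> L x dvd L y" using insert.prems(2) insert(2) by auto
  have nd: "\<not> L x dvd (\<Prod>x\<in>F. L x ^ e x)"
  proof
    assume "L x dvd (\<Prod>x\<in>F. L x ^ e x)"
    then obtain y where "y \<in> F" "L x dvd L y" using lprime_dvd_prod[of "L x" F L e] insert by auto
    thus False using nd0 by blast
  qed
  have "L x ^ e x dvd (\<Prod>x\<in>F. L x ^ e x) * g" using insert g by simp
  hence "L x ^ e x dvd g" using pow_cancel[of "L x" "\<Prod>x\<in>F. L x ^ e x"] nd insert by blast
  hence "L x ^ e x * (\<Prod>x\<in>F. L x ^ e x) dvd g * (\<Prod>x\<in>F. L x ^ e x)" by (rule mult_dvd_mono) simp
  thus ?case using g insert(1,2) by (simp add: mult.commute)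
qed

lemma ker_scale: "t \<noteq> 0 \<Longrightarrow> lin_ker (\<lambda>i. t * (a::'n::finite \<Rightarrow> 'k::field) i) = lin_ker a"
  unfolding lin_ker_def by (simp add: mult.assoc sum_distrib_left[symmetric])



theorem lemma3p2:
  fixes A :: "('n::finite \<Rightarrow> 'k::field) set set"
    and alpha :: "('n \<Rightarrow> 'k) set \<Rightarrow> 'n \<Rightarrow> 'k"
    and m :: "('n \<Rightarrow> 'k) set \<Rightarrow> nat"
    and H0 :: "('n \<Rightarrow> 'k) set"
    and p :: nat
    and \<delta> :: "('n, 'k) mpoly list \<Rightarrow> ('n, 'k) mpoly"
  assumes "multiarr A alpha m"
    and "H0 \<in> A"
    and "p \<ge> 1"
    and "\<delta> \<in> D0_p A alpha m H0 p"
  shows "\<delta> \<in> D_p_restr A alpha m H0 p"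
proof -
  note MA = assms(1)[unfolded multiarr_def]
  define a where "a = alpha H0"
  define la where "la = lin_poly a"
  have der: "der_p p \<delta>" and D0: "\<And>fs. length fs = p \<and> fs ! 0 = la \<longrightarrow> \<delta> fs = 0"
    and Dc: "\<And>H fs. H \<in> A \<Longrightarrow> length fs = p \<Longrightarrow> fs ! 0 = lin_poly (alpha H) \<Longrightarrow> lin_poly (alpha H) ^ m H dvd \<delta> fs"
    using assms(4) unfolding D0_p_def D_p_def la_def a_def by blast+
  obtain k where ak: "a k \<noteq> 0" using MA assms(2) unfolding a_def by blast
  have H0ker: "H0 = lin_ker a" using MA assms(2) unfolding a_def by blast
  have dm: "der_mod la p \<delta>" by (rule der_mod_of_der[OF der D0])
  have p0: "0 < p" using assms(3) by simp
  have main: "\<exists>q r. \<delta> fs = lin_poly b ^ restr_mult A m H0 X * q + la * r"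
    if X: "X \<in> restr_arr A H0" and bX: "H0 \<inter> lin_ker b = X" and fs: "length fs = p" "fs ! 0 = lin_poly b"
    for X b fs
  proof -
    define B where "B = {H\<in>A. X \<subseteq> H \<and> H \<noteq> H0}"
    have finB: "finite B" using MA unfolding B_def by simp
    have BA: "B \<subseteq> A" unfolding B_def by blast
    have nz: "\<exists>j. alpha H j \<noteq> 0" if "H \<in> B" for H using MA that BA by blast
    have kerH: "H = lin_ker (alpha H)" if "H \<in> B" for H using MA that BA by blast
    have comb: "\<exists>s t. s \<noteq> 0 \<and> (\<forall>i. alpha H i = s * b i + t * a i)" if HB: "H \<in> B" for H
    proof -
      have "lin_ker a \<inter> lin_ker b \<subseteq> lin_ker (alpha H)"
        using bX HB kerH[OF HB] H0ker unfolding B_def by auto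
      then obtain s t where st: "\<forall>i. alpha H i = s * b i + t * a i" using ker_L[of a k b "alpha H", OF ak] by blast
      have "s \<noteq> 0"
      proof
        assume s0: "s = 0"
        hence e: "alpha H = (\<lambda>i. t * a i)" using st by auto
        have "t \<noteq> 0" using nz[OF HB] e by auto
        hence "lin_ker (alpha H) = lin_ker a" using e ker_scale by simp
        hence "H = H0" using kerH[OF HB] H0ker by simp
        thus False using HB unfolding B_def by blast
      qed
      thus ?thesis using st by blast
    qed
    have dv: "lin_poly (alpha H) ^ m H dvd \<delta> fs" if HB: "H \<in> B" for H
    proof -
      obtain s t where s0: "s \<noteq> 0" and st: "\<forall>i. alpha H i = s * b i + t * a i" using comb[OF HB] by blast
      have lH: "lin_poly (alpha H) = const_poly s * lin_poly b + const_poly t * la"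
      proof -
        have "alpha H = (\<lambda>i. s * b i + t * a i)" using st by (intro ext) simp
        thus ?thesis unfolding la_def by (simp only: lin_poly_comb)
      qed
      have "\<delta> (fs[0 := lin_poly (alpha H)]) = const_poly s * \<delta> (fs[0 := lin_poly b]) + \<delta> (fs[0 := const_poly t * la])"
        unfolding lH by (rule der_lin[OF der fs(1) p0])
      also have "\<delta> (fs[0 := const_poly t * la]) = const_poly t * \<delta> (fs[0 := la])"
        by (rule der_scal[OF der fs(1) p0])
      also have "\<delta> (fs[0 := la]) = 0" using D0 fs p0 by simp
      also have "fs[0 := lin_poly b] = fs" using fs by (metis list_update_id)
      finally have e: "\<delta> (fs[0 := lin_poly (alpha H)]) = const_poly s * \<delta> fs" by simp
      have "lin_poly (alpha H) ^ m H dvd \<delta> (fs[0 := lin_poly (alpha H)])"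
        using Dc[of H "fs[0 := lin_poly (alpha H)]"] HB BA fs p0 by auto
      hence "lin_poly (alpha H) ^ m H dvd const_poly (1 / s) * (const_poly s * \<delta> fs)"
        unfolding e by (rule dvd_mult)
      also have "const_poly (1 / s) * (const_poly s * \<delta> fs) = \<delta> fs"
        using s0 by (simp add: mult.assoc[symmetric] const_poly_mult[symmetric])
      finally show ?thesis .
    qed
    have prime: "\<forall>H\<in>B. lprime (lin_poly (alpha H))"
      using nz lin_lprime by blast
    have ndiv: "\<forall>H1\<in>B. \<forall>H2\<in>B. H1 \<noteq> H2 \<longrightarrow> \<not> lin_poly (alpha H1) dvd lin_poly (alpha H2)"
    proof (intro ballI impI notI)
      fix H1 H2 assume H1: "H1 \<in> B" and H2: "H2 \<in> B" and ne: "H1 \<noteq> H2"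
        and d: "lin_poly (alpha H1) dvd lin_poly (alpha H2)"
      obtain j where j: "alpha H1 j \<noteq> 0" using nz[OF H1] by blast
      define t where "t = alpha H2 j / alpha H1 j"
      have e: "alpha H2 = (\<lambda>i. t * alpha H1 i)"
      proof
        fix i show "alpha H2 i = t * alpha H1 i" unfolding t_def using lin_dvd_lin[OF j d] by blast
      qed
      have "t \<noteq> 0" using nz[OF H2] e by auto
      hence "lin_ker (alpha H2) = lin_ker (alpha H1)" using e ker_scale by simp
      thus False using kerH[OF H1] kerH[OF H2] ne by simp
    qed
    define P where "P = (\<Prod>H\<in>B. lin_poly (alpha H) ^ m H)"
    have "P dvd \<delta> fs" unfolding P_def
      by (rule prod_dvd[OF finB prime ndiv]) (use dv in blast)
    then obtain h where h: "\<delta> fs = P * h" by (auto elim: dvdE)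
    have ex: "\<forall>H\<in>B. \<exists>c. la dvd lin_poly (alpha H) - const_poly c * lin_poly b"
    proof
      fix H assume HB: "H \<in> B"
      obtain s t where st: "\<forall>i. alpha H i = s * b i + t * a i" using comb[OF HB] by blast
      have lH: "lin_poly (alpha H) = const_poly s * lin_poly b + const_poly t * la"
      proof -
        have "alpha H = (\<lambda>i. s * b i + t * a i)" using st by (intro ext) simp
        thus ?thesis unfolding la_def by (simp only: lin_poly_comb)
      qed
      show "\<exists>c. la dvd lin_poly (alpha H) - const_poly c * lin_poly b" by (rule exI[of _ s]) (simp add: lH)
    qed
    from bchoice[OF ex] obtain cf where cf0: "\<forall>H\<in>B. la dvd lin_poly (alpha H) - const_poly (cf H) * lin_poly b" ..
    hence cf: "\<And>H. H \<in> B \<Longrightarrow> la dvd lin_poly (alpha H) - const_poly (cf H) * lin_poly b" by blast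
    define Q :: "('n,'k) mpoly" where "Q = (\<Prod>H\<in>B. const_poly (cf H) ^ m H)"
    have "la dvd P - (\<Prod>H\<in>B. (const_poly (cf H) * lin_poly b) ^ m H)"
      unfolding P_def by (rule dvd_prod_diff) (simp add: dvd_power_diff cf)
    also have "(\<Prod>H\<in>B. (const_poly (cf H) * lin_poly b) ^ m H) = Q * lin_poly b ^ restr_mult A m H0 X"
      unfolding Q_def restr_mult_def B_def[symmetric] power_mult_distrib prod.distrib power_sum ..
    finally obtain r0 where r0: "P - Q * lin_poly b ^ restr_mult A m H0 X = la * r0" by (auto elim: dvdE)
    have "\<delta> fs = lin_poly b ^ restr_mult A m H0 X * (Q * h) + la * (r0 * h)"
    proof -
      have "P = la * r0 + Q * lin_poly b ^ restr_mult A m H0 X" using r0 by (simp only: diff_eq_eq)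
      thus ?thesis unfolding h by (simp add: algebra_simps)
    qed
    thus ?thesis by blast
  qed
  show ?thesis
    unfolding D_p_restr_def mem_Collect_eq
    using dm main unfolding la_def a_def by blast
qed

end
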